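(* Let $\rho\ge1$ and let $b_\alpha\in C^\infty(\mathbb{T}^n)$, $\alpha\in\mathbb{N}^n$, $|\alpha|\ge2$, satisfy $$|\partial_\theta^\beta b_\alpha(\theta)|\le L_0L_1^{|\beta|}L_2^{|\alpha|-1}\Gamma(\rho|\beta|+1)\Gamma((\rho-1)|\alpha|+1)$$ for all $\theta\in\mathbb{T}^n$, all $\beta\in\mathbb{N}^n$ and all $|\alpha|\ge2$, where $L_0,L_1,L_2\ge1$. Then there are constants $c,c',c''>0$ depending only on $n$ and $\rho$ such that, with $\tilde L_0=cL_0L_1^{n+2}$, $L_1'=c'L_1$, $L_2'=c''L_2$, $$P_s(b_\alpha)\le\tilde L_0(L_1')^s(L_2')^{|\alpha|-1}\Gamma(\rho s+(\rho-1)(|\alpha|-2)+1)$$ for every $s\ge0$ and every $\alpha\in\mathbb{N}^n$ with $|\alpha|\ge2$.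
   Context: $\Gamma$ is Euler's Gamma function. For $u\in C(\mathbb{T}^n)$ with Fourier coefficients $u_k$, $S_s(u)=\sum_{k\in\mathbb{Z}^n}(1+|k|)^s|u_k|$, $|k|=\sum|k_j|$, and $P_s(u)=(s+1)^2S_s(u)$. (In the paper, $b_\alpha(\theta)=(\alpha!)^{-1}\partial_r^\alpha\widetilde H(\theta,0)$ are the Taylor coefficients of the nonlinear part of a Hamiltonian.) *)

theory Defs
  imports "HOL-Analysis.Analysis"
begin

text \<open>Functions on the torus T^n are represented as functions on real^'n that are
  2 pi-periodic in each coordinate. Multi-indices are functions 'n => nat.\<close>

definition periodic_torus :: "(real^'n \<Rightarrow> real) \<Rightarrow> bool" where
  "periodic_torus f \<longleftrightarrow> (\<forall>x i. f (x + (2*pi) *\<^sub>R axis i 1) = f x)"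

definition pdir :: "'n::finite \<Rightarrow> (real^'n \<Rightarrow> real) \<Rightarrow> real^'n \<Rightarrow> real" where
  "pdir i f x = deriv (\<lambda>t. f (x + t *\<^sub>R axis i 1)) 0"

fun ipd :: "'n::finite list \<Rightarrow> (real^'n \<Rightarrow> real) \<Rightarrow> real^'n \<Rightarrow> real" where
  "ipd [] f = f"
| "ipd (i # is) f = pdir i (ipd is f)"

definition smooth_fun :: "(real^'n::finite \<Rightarrow> real) \<Rightarrow> bool" where
  "smooth_fun f \<longleftrightarrow> (\<forall>ds. continuous_on UNIV (ipd ds f) \<and>
      (\<forall>i x. (\<lambda>t. ipd ds f (x + t *\<^sub>R axis i 1)) differentiable (at 0)))"

definition enum_idx :: "'n::finite list" where
  "enum_idx = (SOME xs. distinct xs \<and> set xs = UNIV)"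

definition pdiff :: "('n::finite \<Rightarrow> nat) \<Rightarrow> (real^'n \<Rightarrow> real) \<Rightarrow> real^'n \<Rightarrow> real" where
  "pdiff \<beta> f = ipd (concat (map (\<lambda>i. replicate (\<beta> i) i) enum_idx)) f"

definition mabs :: "('n::finite \<Rightarrow> nat) \<Rightarrow> nat" where
  "mabs \<alpha> = (\<Sum>i\<in>UNIV. \<alpha> i)"

definition kabs :: "('n::finite \<Rightarrow> int) \<Rightarrow> int" where
  "kabs k = (\<Sum>i\<in>UNIV. \<bar>k i\<bar>)"

definition fourier_coeff :: "(real^'n::finite \<Rightarrow> real) \<Rightarrow> ('n \<Rightarrow> int) \<Rightarrow> complex" where
  "fourier_coeff u k = complex_of_real (1 / (2*pi) ^ CARD('n)) *
     integral (cbox 0 (\<chi> i. 2*pi))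
       (\<lambda>\<theta>. complex_of_real (u \<theta>) * cis (- (\<Sum>j\<in>UNIV. of_int (k j) * \<theta> $ j)))"

definition S_norm :: "real \<Rightarrow> (real^'n::finite \<Rightarrow> real) \<Rightarrow> real" where
  "S_norm s u = (\<Sum>\<^sub>\<infinity>k\<in>UNIV. (1 + real_of_int (kabs k)) powr s * cmod (fourier_coeff u k))"

definition S_summable :: "real \<Rightarrow> (real^'n::finite \<Rightarrow> real) \<Rightarrow> bool" where
  "S_summable s u \<longleftrightarrow> (\<lambda>k. (1 + real_of_int (kabs k)) powr s * cmod (fourier_coeff u k)) summable_on UNIV"

definition P_norm :: "real \<Rightarrow> (real^'n::finite \<Rightarrow> real) \<Rightarrow> real" where
  "P_norm s u = (s + 1)^2 * S_norm s u"

end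

theory Submission
  imports Defs
begin


lemma Gamma_plus1_real: "(x::real) > 0 \<Longrightarrow> Gamma (x + 1) = x * Gamma x"
  by (rule Gamma_plus1) (auto elim!: nonpos_Ints_cases)

lemma Gamma_superadd:
  fixes x y :: real assumes x: "x \<ge> 1" and y: "y \<ge> 1"
  shows "Gamma x * Gamma y \<le> Gamma (x + y)"
proof -
  define S where "S = x + y - 1"
  define f where "f = (ln \<circ> Gamma :: real \<Rightarrow> real)"
  have cv: "convex_on {0<..} f" unfolding f_def by (rule log_convex_Gamma_real)
  have f1: "f 1 = 0" by (simp add: f_def)
  have S1: "S \<ge> 1" using x y by (simp add: S_def)
  have key: "f x + f y \<le> f S"
  proof (cases "S = 1")
    case True then have "x = 1" "y = 1" using x y S_def by auto
    then show ?thesis using True f1 by simp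
  next
    case False
    define t where "t = (x - 1) / (S - 1)"
    have t0: "t \<ge> 0" "t \<le> 1" using x y False S1 by (auto simp: t_def S_def field_simps)
    have tS: "t * (S - 1) = x - 1" using False by (simp add: t_def)
    have ex: "x = (1 - t) *\<^sub>R 1 + t *\<^sub>R S" using tS by (simp add: algebra_simps)
    have ey: "y = (1 - (1 - t)) *\<^sub>R 1 + (1 - t) *\<^sub>R S" using tS by (simp add: algebra_simps S_def)
    have "f x \<le> (1 - t) * f 1 + t * f S"
      unfolding ex by (rule convex_onD[OF cv]) (use t0 S1 in auto)
    moreover have "f y \<le> (1 - (1 - t)) * f 1 + (1 - t) * f S"
      unfolding ey by (rule convex_onD[OF cv]) (use t0 S1 in auto)
    ultimately show ?thesis using f1 by (simp add: algebra_simps)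
  qed
  have "Gamma x * Gamma y = exp (f x + f y)"
    using x y by (simp add: f_def exp_add)
  also have "\<dots> \<le> exp (f S)" using key by simp
  also have "\<dots> = Gamma S" using S1 by (simp add: f_def)
  also have "\<dots> \<le> S * Gamma S" using S1 Gamma_real_pos[of S] by simp
  also have "\<dots> = Gamma (x + y)" using Gamma_plus1_real[of S] S1 by (simp add: S_def)
  finally show ?thesis .
qed

lemma Gamma_mono2:
  fixes x y :: real assumes "x \<ge> 3/2" "x \<le> y" shows "Gamma x \<le> Gamma y"
  using Gamma_real_strict_mono[of x y] assms by (cases "x = y") auto

lemma Gamma_shift_nat:
  fixes x :: real assumes "x > 0"
  shows "Gamma (x + real D) \<le> (x + real D) ^ D * Gamma x"
proof (induction D)
  case 0 then show ?case by simp
next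
  case (Suc D)
  have "Gamma (x + real (Suc D)) = (x + real D) * Gamma (x + real D)"
    using Gamma_plus1_real[of "x + real D"] assms by (simp add: add_ac)
  also have "\<dots> \<le> (x + real (Suc D)) * ((x + real D) ^ D * Gamma x)"
    using Suc assms by (intro mult_mono) auto
  also have "\<dots> \<le> (x + real (Suc D)) * ((x + real (Suc D)) ^ D * Gamma x)"
    using assms Gamma_real_pos[of x] by (intro mult_left_mono mult_right_mono power_mono) auto
  finally show ?case by simp
qed

lemma pow_le_exp: fixes y :: real assumes "y \<ge> 0" "D \<ge> 1"
  shows "y ^ D \<le> real D ^ D * exp y"
proof -
  have "y / real D \<le> exp (y / real D)" using exp_ge_add_one_self[of "y / real D"] by linarith
  then have "(y / real D) ^ D \<le> exp (y / real D) ^ D" using assms by (intro power_mono) auto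
  also have "\<dots> = exp y" using assms by (simp add: exp_of_nat_mult[symmetric])
  finally show ?thesis using assms by (simp add: power_divide field_simps)
qed

lemma gamma_part:
  fixes \<rho> s :: real and a m N :: nat
  assumes \<rho>: "\<rho> \<ge> 1" and s: "s \<ge> 0" and a: "a \<ge> 2" and m: "real m \<le> s + real N + 2"
  defines "D \<equiv> nat \<lceil>\<rho> * (real N + 4)\<rceil>"
  shows "Gamma ((\<rho> - 1) * real a + 1) * Gamma (\<rho> * real m + 1) \<le>
     real D ^ D * exp (real D + 1) * exp (\<rho> * s) * exp (\<rho> * real a) * Gamma (\<rho> * s + (\<rho> - 1) * (real a - 2) + 1)"
proof -
  define z where "z = \<rho> * s + (\<rho> - 1) * (real a - 2) + 1"
  have z1: "z \<ge> 1" using \<rho> s a by (simp add: z_def)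
  have Dge: "real D \<ge> \<rho> * (real N + 4)" unfolding D_def by linarith
  have "real N + 4 \<le> \<rho> * (real N + 4)" using mult_right_mono[of 1 \<rho> "real N + 4"] \<rho> by simp
  then have "real D \<ge> 4" using Dge by linarith
  then have D1: "D \<ge> 1" by simp
  have "Gamma ((\<rho> - 1) * real a + 1) * Gamma (\<rho> * real m + 1) \<le> Gamma ((\<rho> - 1) * real a + 1 + (\<rho> * real m + 1))"
    by (rule Gamma_superadd) (use \<rho> in auto)
  also have "\<dots> \<le> Gamma (z + real D)"
  proof (rule Gamma_mono2)
    show "3/2 \<le> (\<rho> - 1) * real a + 1 + (\<rho> * real m + 1)" using \<rho> by simp
    have "\<rho> * real m \<le> \<rho> * (s + real N + 2)" using m \<rho> by (intro mult_left_mono) auto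
    then show "(\<rho> - 1) * real a + 1 + (\<rho> * real m + 1) \<le> z + real D"
      using Dge \<rho> by (simp add: z_def algebra_simps)
  qed
  also have "\<dots> \<le> (z + real D) ^ D * Gamma z" using z1 by (intro Gamma_shift_nat) auto
  also have "\<dots> \<le> (real D ^ D * exp (z + real D)) * Gamma z"
    using z1 D1 by (intro mult_right_mono pow_le_exp) auto
  also have "exp (z + real D) \<le> exp (real D + 1) * exp (\<rho> * s) * exp (\<rho> * real a)"
  proof -
    have "z + real D \<le> real D + 1 + \<rho> * s + \<rho> * real a" using \<rho> a by (simp add: z_def algebra_simps)
    then show ?thesis by (simp add: exp_add[symmetric])
  qed
  then have "(real D ^ D * exp (z + real D)) * Gamma z \<le> (real D ^ D * (exp (real D + 1) * exp (\<rho> * s) * exp (\<rho> * real a))) * Gamma z"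
    using z1 by (intro mult_right_mono mult_left_mono) auto
  finally show ?thesis by (simp add: z_def mult_ac)
qed

lemma sq_le_exp: fixes s :: real assumes "s \<ge> 0" shows "(s + 1)^2 \<le> 4 * exp s"
proof -
  have "s + 1 \<le> 2 * exp (s/2)" using exp_ge_add_one_self[of "s/2"] by linarith
  then have "(s + 1)^2 \<le> (2 * exp (s/2))^2" using assms by (intro power_mono) auto
  also have "\<dots> = 4 * exp s" by (simp add: power2_eq_square exp_add[symmetric])
  finally show ?thesis .
qed

lemma pow_split: fixes b s :: real assumes "b \<ge> 1" "real m \<le> s + real M"
  shows "b ^ m \<le> b ^ M * b powr s"
proof -
  have "b ^ m = b powr real m" using assms by (simp add: powr_realpow)
  also have "\<dots> \<le> b powr (s + real M)" using assms by (intro powr_mono) auto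
  also have "\<dots> = b ^ M * b powr s" using assms by (simp add: powr_add powr_realpow)
  finally show ?thesis .
qed



lemma ge1_mult: "(x::real) \<ge> 1 \<Longrightarrow> y \<ge> 1 \<Longrightarrow> x * y \<ge> 1"
  using mult_mono[of 1 x 1 y] by simp

lemma final_real:
  fixes \<rho> s K L0 L1 L2 :: real and a m N :: nat
  assumes \<rho>: "\<rho> \<ge> 1" and s: "s \<ge> 0" and a: "a \<ge> 2" and N: "N \<ge> 1" and K: "K \<ge> 0"
    and L: "L0 \<ge> 1" "L1 \<ge> 1" "L2 \<ge> 1" and m: "real m \<le> s + real N + 2" "m \<ge> 1"
  defines "A \<equiv> L0 * L2 ^ (a - 1) * Gamma ((\<rho> - 1) * real a + 1)"
    and "D \<equiv> nat \<lceil>\<rho> * (real N + 4)\<rceil>"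
  shows "(s + 1)^2 * (2 ^ m * (A + real N ^ m * (A * L1 ^ m * Gamma (\<rho> * real m + 1)))) * K \<le>
    ((4 * (K + 1) * 2 ^ (N + 3) * real N ^ (N + 2) * real D ^ D * exp (real D + 1) * exp \<rho>) * L0 * L1 ^ (N + 2)) *
    (exp (1 + \<rho>) * 2 * real N * L1) powr s * (exp \<rho> * L2) ^ (a - 1) *
    Gamma (\<rho> * s + (\<rho> - 1) * (real a - 2) + 1)"
proof -
  define Gq where "Gq = Gamma ((\<rho> - 1) * real a + 1)"
  define Gm where "Gm = Gamma (\<rho> * real m + 1)"
  define Gz where "Gz = Gamma (\<rho> * s + (\<rho> - 1) * (real a - 2) + 1)"
  define LL where "LL = L0 * L2 ^ (a - 1)"
  have LL1: "LL \<ge> 1" using L by (simp add: LL_def ge1_mult one_le_power)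
  have Gq0: "Gq > 0" using \<rho> unfolding Gq_def by (intro Gamma_real_pos add_nonneg_pos mult_nonneg_nonneg) auto
  have Gz0: "Gz > 0" using \<rho> s a unfolding Gz_def by (intro Gamma_real_pos add_nonneg_pos mult_nonneg_nonneg add_nonneg_nonneg) auto
  have G2: "Gamma (2::real) = 1" using Gamma_plus1_real[of 1] by simp
  have Gm1: "Gm \<ge> 1"
  proof -
    have "real m \<ge> 1" using m by simp
    then have "\<rho> * real m \<ge> 1 * 1" using \<rho> by (intro mult_mono) auto
    then have "Gamma 2 \<le> Gm" unfolding Gm_def by (intro Gamma_mono2) auto
    then show ?thesis using G2 by simp
  qed
  have Nm: "real N ^ m \<ge> 1" using N by simp
  have L1m: "L1 ^ m \<ge> 1" using L by simp
  have AA: "A = LL * Gq" by (simp add: A_def LL_def Gq_def)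
  have one: "1 \<le> real N ^ m * L1 ^ m * Gm" using Nm L1m Gm1 by (simp add: ge1_mult)
  have stepA: "A + real N ^ m * (A * L1 ^ m * Gm) \<le> 2 * real N ^ m * L1 ^ m * LL * (Gq * Gm)"
  proof -
    have "A \<le> real N ^ m * L1 ^ m * Gm * A" using mult_right_mono[OF one, of A] AA LL1 Gq0 by simp
    then show ?thesis by (simp add: AA algebra_simps)
  qed
  define GG where "GG = Gq * Gm"
  have gp: "GG \<le> real D ^ D * exp (real D + 1) * exp (\<rho> * s) * (exp \<rho> * exp \<rho> ^ (a - 1)) * Gz"
  proof -
    have e: "exp (\<rho> * real a) = exp \<rho> * exp \<rho> ^ (a - 1)"
    proof -
      have "exp (\<rho> * real a) = exp \<rho> ^ a" by (simp add: exp_of_nat_mult[symmetric] mult.commute)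
      also have "\<dots> = exp \<rho> * exp \<rho> ^ (a - 1)" using a by (simp add: power_eq_if)
      finally show ?thesis .
    qed
    show ?thesis using gamma_part[OF \<rho> s a m(1)] unfolding GG_def Gq_def Gm_def Gz_def D_def e .
  qed
  define P1 where "P1 = (s + 1)^2"
  define Q1 where "Q1 = 4 * exp s"
  define P2 where "P2 = (2::real) ^ m"
  define Q2 where "Q2 = (2::real) ^ (N + 2) * 2 powr s"
  define P3 where "P3 = real N ^ m"
  define Q3 where "Q3 = real N ^ (N + 2) * real N powr s"
  define P4 where "P4 = L1 ^ m"
  define Q4 where "Q4 = L1 ^ (N + 2) * L1 powr s"
  define Q5 where "Q5 = real D ^ D * exp (real D + 1) * exp (\<rho> * s) * (exp \<rho> * exp \<rho> ^ (a - 1)) * Gz"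
  have PQ1: "P1 \<le> Q1" unfolding P1_def Q1_def by (rule sq_le_exp[OF s])
  have PQ2: "P2 \<le> Q2" unfolding P2_def Q2_def by (rule pow_split) (use m in auto)
  have PQ3: "P3 \<le> Q3" unfolding P3_def Q3_def by (rule pow_split) (use m N in auto)
  have PQ4: "P4 \<le> Q4" unfolding P4_def Q4_def by (rule pow_split) (use m L in auto)
  have P0: "P1 \<ge> 0" "P2 \<ge> 0" "P3 \<ge> 0" "P4 \<ge> 0" "GG \<ge> 0"
    using Gq0 Gm1 L by (auto simp: P1_def P2_def P3_def P4_def GG_def)
  have Q0: "Q1 \<ge> 0" "Q2 \<ge> 0" "Q3 \<ge> 0" "Q4 \<ge> 0" "Q5 \<ge> 0"
    using Gz0 L by (auto simp: Q1_def Q2_def Q3_def Q4_def Q5_def)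
  have "(s + 1)^2 * (2 ^ m * (A + real N ^ m * (A * L1 ^ m * Gamma (\<rho> * real m + 1)))) * K
      \<le> P1 * (P2 * (2 * P3 * P4 * LL * GG)) * K"
    unfolding P1_def P2_def P3_def P4_def GG_def Gm_def[symmetric]
    using stepA K by (intro mult_right_mono mult_left_mono) auto
  also have "\<dots> \<le> Q1 * (Q2 * (2 * Q3 * Q4 * LL * Q5)) * K"
    using PQ1 PQ2 PQ3 PQ4 gp[folded Q5_def] P0 Q0 K LL1
    by (intro mult_right_mono mult_mono mult_left_mono) (auto intro!: mult_nonneg_nonneg)
  also have "\<dots> \<le> Q1 * (Q2 * (2 * Q3 * Q4 * LL * Q5)) * (K + 1)"
    using Q0 LL1 by (intro mult_left_mono) (auto intro!: mult_nonneg_nonneg)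
  also have "\<dots> = ((4 * (K + 1) * 2 ^ (N + 3) * real N ^ (N + 2) * real D ^ D * exp (real D + 1) * exp \<rho>) * L0 * L1 ^ (N + 2)) *
    (exp (1 + \<rho>) * 2 * real N * L1) powr s * (exp \<rho> * L2) ^ (a - 1) * Gz"
  proof -
    have e1: "exp (1 + \<rho>) powr s = exp s * exp (\<rho> * s)"
      by (simp add: powr_def exp_add[symmetric] algebra_simps)
    have e2: "(exp (1 + \<rho>) * 2 * real N * L1) powr s = exp (1 + \<rho>) powr s * 2 powr s * real N powr s * L1 powr s"
      using N L by (simp add: powr_mult)
    show ?thesis unfolding e2 e1 Q1_def Q2_def Q3_def Q4_def Q5_def LL_def
      by (simp add: power_mult_distrib power_add mult_ac)
  qed
  finally show ?thesis unfolding Gz_def .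
qed



lemma integral_split_cart:
  fixes f :: "real^'n \<Rightarrow> 'b::banach"
  assumes "f integrable_on cbox a b"
  shows "integral (cbox a b) f = integral (cbox a b \<inter> {x. x$k \<le> c}) f + integral (cbox a b \<inter> {x. x$k \<ge> c}) f"
proof -
  have kb: "axis k (1::real) \<in> Basis" by simp
  have e: "\<And>x::real^'n. x \<bullet> axis k 1 = x$k" by (simp add: inner_axis)
  have "(f has_integral (integral (cbox a b \<inter> {x. x$k \<le> c}) f + integral (cbox a b \<inter> {x. x$k \<ge> c}) f)) (cbox a b)"
    using has_integral_split[OF _ _ kb, of f _ a b c] integrable_split[OF assms kb, of c]
    unfolding e by (auto intro: integrable_integral)
  then show ?thesis by (rule integral_unique)
qed

lemma all_split_at: "(\<forall>i. Q i) \<longleftrightarrow> Q j \<and> (\<forall>i. i \<noteq> j \<longrightarrow> Q i)" by auto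

lemma cont_integrable_cbox:
  fixes g :: "real^'n \<Rightarrow> 'b::banach"
  assumes "continuous_on UNIV g" shows "g integrable_on cbox a b"
  by (rule integrable_continuous) (rule continuous_on_subset[OF assms], simp)

lemma shift_inv_pos:
  fixes g :: "real^'n \<Rightarrow> 'b::banach"
  assumes cg: "continuous_on UNIV g" and per: "\<And>x. g (x + (2*pi) *\<^sub>R axis j 1) = g x"
    and t: "0 \<le> t" "t \<le> 2*pi"
  shows "integral (cbox 0 (\<chi> i. 2*pi)) (\<lambda>x. g (x + t *\<^sub>R axis j 1)) = integral (cbox 0 (\<chi> i. 2*pi)) g"
proof -
  define P where "P = 2*pi"
  define E where "E = (axis j 1 :: real^'n)"
  define bb where "bb = (\<chi> i. P :: real^'n)"
  have P: "P > 0" by (simp add: P_def)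
  have int: "\<And>a b. g integrable_on cbox a b" using cont_integrable_cbox[OF cg] .
  have h1: "integral (cbox 0 bb) (\<lambda>x. g (x + t *\<^sub>R E)) = integral (cbox (t *\<^sub>R E) (bb + t *\<^sub>R E)) g"
    using integral_shift_cbox[where a="t *\<^sub>R E" and b="bb + t *\<^sub>R E" and c="t *\<^sub>R E" and f=g] by simp
  have h2: "integral (cbox (t *\<^sub>R E) (bb + t *\<^sub>R E)) g =
     integral (cbox (t *\<^sub>R E) (bb + t *\<^sub>R E) \<inter> {x. x$j \<le> P}) g + integral (cbox (t *\<^sub>R E) (bb + t *\<^sub>R E) \<inter> {x. x$j \<ge> P}) g"
    by (rule integral_split_cart[OF int])
  have h3: "cbox (t *\<^sub>R E) (bb + t *\<^sub>R E) \<inter> {x. x$j \<le> P} = cbox 0 bb \<inter> {x. x$j \<ge> t}"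
    using t P unfolding set_eq_iff mem_box_cart Int_iff mem_Collect_eq E_def bb_def
    apply (subst (1 2) all_split_at[where j=j])
    apply (simp add: axis_def)
    by (auto simp: P_def)
  have h4: "cbox (t *\<^sub>R E) (bb + t *\<^sub>R E) \<inter> {x. x$j \<ge> P} = cbox (P *\<^sub>R E) (bb + t *\<^sub>R E)"
    using t P unfolding set_eq_iff mem_box_cart Int_iff mem_Collect_eq E_def bb_def
    apply (subst (1 2) all_split_at[where j=j])
    apply (simp add: axis_def)
    by (auto simp: P_def)
  have h5: "integral (cbox (P *\<^sub>R E) (bb + t *\<^sub>R E)) g = integral (cbox 0 (bb + (t - P) *\<^sub>R E)) g"
  proof -
    have "integral (cbox (P *\<^sub>R E - P *\<^sub>R E) (bb + t *\<^sub>R E - P *\<^sub>R E)) (\<lambda>x. g (x + P *\<^sub>R E)) = integral (cbox (P *\<^sub>R E) (bb + t *\<^sub>R E)) g"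
      by (rule integral_shift_cbox)
    moreover have "(\<lambda>x. g (x + P *\<^sub>R E)) = g" using per by (simp add: P_def E_def)
    moreover have "bb + t *\<^sub>R E - P *\<^sub>R E = bb + (t - P) *\<^sub>R E" by (simp add: algebra_simps)
    ultimately show ?thesis by simp
  qed
  have h6: "cbox 0 (bb + (t - P) *\<^sub>R E) = cbox 0 bb \<inter> {x. x$j \<le> t}"
    using t P unfolding set_eq_iff mem_box_cart Int_iff mem_Collect_eq E_def bb_def
    apply (subst (1 2) all_split_at[where j=j])
    apply (simp add: axis_def)
    by (auto simp: P_def)
  have h7: "integral (cbox 0 bb) g = integral (cbox 0 bb \<inter> {x. x$j \<le> t}) g + integral (cbox 0 bb \<inter> {x. x$j \<ge> t}) g"
    by (rule integral_split_cart[OF int])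
  show ?thesis
    using h1 h2 h3 h4 h5 h6 h7 unfolding bb_def E_def P_def by (simp add: add.commute)
qed

lemma shift_inv:
  fixes g :: "real^'n \<Rightarrow> 'b::banach"
  assumes cg: "continuous_on UNIV g" and per: "\<And>x. g (x + (2*pi) *\<^sub>R axis j 1) = g x"
    and t: "-2*pi \<le> t" "t \<le> 2*pi"
  shows "integral (cbox 0 (\<chi> i. 2*pi)) (\<lambda>x. g (x + t *\<^sub>R axis j 1)) = integral (cbox 0 (\<chi> i. 2*pi)) g"
proof (cases "t \<ge> 0")
  case True then show ?thesis using shift_inv_pos[OF cg per] t by blast
next
  case False
  have "(\<lambda>x. g (x + t *\<^sub>R axis j 1)) = (\<lambda>x. g (x + (t + 2*pi) *\<^sub>R axis j 1))"
  proof
    fix x :: "real^'n"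
    have "g (x + (t + 2*pi) *\<^sub>R axis j 1) = g ((x + t *\<^sub>R axis j 1) + (2*pi) *\<^sub>R axis j 1)"
      by (simp add: algebra_simps)
    also have "\<dots> = g (x + t *\<^sub>R axis j 1)" by (rule per)
    finally show "g (x + t *\<^sub>R axis j 1) = g (x + (t + 2*pi) *\<^sub>R axis j 1)" by simp
  qed
  then show ?thesis using shift_inv_pos[OF cg per, of "t + 2*pi"] t False by simp
qed

lemma ipd_append: "ipd ds (ipd es f) = ipd (ds @ es) f"
  by (induction ds) auto

lemma smooth_pdir: "smooth_fun f \<Longrightarrow> smooth_fun (pdir j f)"
  unfolding smooth_fun_def
proof (intro allI conjI)
  fix ds assume H: "\<forall>ds. continuous_on UNIV (ipd ds f) \<and> (\<forall>i x. (\<lambda>t. ipd ds f (x + t *\<^sub>R axis i 1)) differentiable at 0)"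
  have e: "ipd ds (pdir j f) = ipd (ds @ [j]) f" using ipd_append[of ds "[j]" f] by simp
  show "continuous_on UNIV (ipd ds (pdir j f))" unfolding e using H by blast
  show "\<And>i x. (\<lambda>t. ipd ds (pdir j f) (x + t *\<^sub>R axis i 1)) differentiable at 0" unfolding e using H by blast
qed

lemma periodic_pdir: "periodic_torus f \<Longrightarrow> periodic_torus (pdir j f)"
  unfolding periodic_torus_def pdir_def
proof (intro allI)
  fix x :: "real^'a" and i
  assume H: "\<forall>x i. f (x + (2 * pi) *\<^sub>R axis i 1) = f x"
  have "(\<lambda>t. f (x + (2 * pi) *\<^sub>R axis i 1 + t *\<^sub>R axis j 1)) = (\<lambda>t. f (x + t *\<^sub>R axis j 1))"
  proof
    fix t
    have "x + (2 * pi) *\<^sub>R axis i 1 + t *\<^sub>R axis j 1 = (x + t *\<^sub>R axis j 1) + (2 * pi) *\<^sub>R axis i 1"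
      by (simp add: algebra_simps)
    then show "f (x + (2 * pi) *\<^sub>R axis i 1 + t *\<^sub>R axis j 1) = f (x + t *\<^sub>R axis j 1)"
      using H by (metis (no_types))
  qed
  then show "deriv (\<lambda>t. f (x + (2 * pi) *\<^sub>R axis i 1 + t *\<^sub>R axis j 1)) 0 = deriv (\<lambda>t. f (x + t *\<^sub>R axis j 1)) 0"
    by simp
qed

lemma smooth_cont: "smooth_fun f \<Longrightarrow> continuous_on UNIV f"
  unfolding smooth_fun_def using ipd.simps(1) by metis

lemma smooth_deriv_line:
  assumes "smooth_fun f"
  shows "((\<lambda>t. f (x + t *\<^sub>R axis i 1)) has_real_derivative pdir i f (x + t0 *\<^sub>R axis i 1)) (at t0)"
proof -
  define y where "y = x + t0 *\<^sub>R axis i 1"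
  have "(\<lambda>s. f (y + s *\<^sub>R axis i 1)) differentiable at 0"
    using assms unfolding smooth_fun_def using ipd.simps(1) by metis
  then have "((\<lambda>s. f (y + s *\<^sub>R axis i 1)) has_real_derivative pdir i f y) (at 0)"
    unfolding pdir_def by (simp add: DERIV_deriv_iff_real_differentiable)
  moreover have "(\<lambda>s. f (y + s *\<^sub>R axis i 1)) = (\<lambda>s. (\<lambda>t. f (x + t *\<^sub>R axis i 1)) (s + t0))"
    by (simp add: y_def algebra_simps)
  ultimately have "((\<lambda>s. (\<lambda>t. f (x + t *\<^sub>R axis i 1)) (s + t0)) has_real_derivative pdir i f y) (at 0)" by simp
  then have "((\<lambda>t. f (x + t *\<^sub>R axis i 1)) has_real_derivative pdir i f y) (at (0 + t0))"
    by (subst DERIV_shift) 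
  then show ?thesis by (simp add: y_def)
qed

definition ee :: "('n::finite \<Rightarrow> int) \<Rightarrow> real^'n \<Rightarrow> complex" where
  "ee k \<theta> = cis (- (\<Sum>j\<in>UNIV. of_int (k j) * \<theta> $ j))"

lemma fc_alt: "fourier_coeff u k = complex_of_real (1 / (2*pi) ^ CARD('n)) *
     integral (cbox 0 (\<chi> i. 2*pi)) (\<lambda>\<theta>. complex_of_real (u \<theta>) * ee k \<theta>)"
  for u :: "real^'n::finite \<Rightarrow> real"
  by (simp add: fourier_coeff_def ee_def)

lemma ee_shift: "ee k (\<theta> + t *\<^sub>R axis j 1) = ee k \<theta> * cis (- (of_int (k j) * t))"
proof -
  have "(\<Sum>l\<in>UNIV. of_int (k l) * (\<theta> + t *\<^sub>R axis j 1) $ l) = (\<Sum>l\<in>UNIV. of_int (k l) * \<theta> $ l) + (\<Sum>l\<in>UNIV. of_int (k l) * (t * (if l = j then 1 else 0)))"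
    by (simp add: algebra_simps sum.distrib axis_def)
  also have "(\<Sum>l\<in>UNIV. of_int (k l) * (t * (if l = j then 1 else 0))) = of_int (k j) * t"
    by (simp add: if_distrib cong: if_cong)
  finally show ?thesis by (simp add: ee_def cis_mult algebra_simps)
qed

lemma cont_ee: "continuous_on UNIV (ee k)"
  unfolding ee_def by (intro continuous_intros)

lemma ee_per: "ee k (\<theta> + (2*pi) *\<^sub>R axis j 1) = ee k \<theta>"
proof -
  have "cis (- (of_int (k j) * (2*pi))) = cis (2 * pi * of_int (- k j))" by (simp add: algebra_simps)
  also have "\<dots> = 1" by (rule cis_multiple_2pi) simp
  finally show ?thesis by (simp add: ee_shift)
qed

lemma fourier_pdir:
  fixes u :: "real^'n::finite \<Rightarrow> real"
  assumes sm: "smooth_fun u" and per: "periodic_torus u"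
  shows "fourier_coeff (pdir j u) k = \<i> * of_int (k j) * fourier_coeff u k"
proof -
  define B where "B = cbox (0::real^'n) (\<chi> i. 2*pi)"
  define E where "E = (axis j 1 :: real^'n)"
  define g where "g = (\<lambda>\<theta>. complex_of_real (u \<theta>) * ee k \<theta>)"
  define I where "I = integral B g"
  define G where "G = (\<lambda>t. integral B (\<lambda>\<theta>. complex_of_real (u (\<theta> + t *\<^sub>R E)) * ee k \<theta>))"
  have cu: "continuous_on UNIV u" by (rule smooth_cont[OF sm])
  have cdu: "continuous_on UNIV (pdir j u)" by (rule smooth_cont[OF smooth_pdir[OF sm]])
  have cg: "continuous_on UNIV g" unfolding g_def
    by (intro continuous_intros cont_ee[of k, THEN continuous_on_subset] continuous_on_subset[OF cu]) auto
  have pg: "g (x + (2*pi) *\<^sub>R axis j 1) = g x" for x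
    using per ee_per[of k x j] by (simp add: g_def periodic_torus_def)
  have GI: "G t = cis (of_int (k j) * t) * I" if "t \<in> {-2*pi<..<2*pi}" for t
  proof -
    have "G t = integral B (\<lambda>\<theta>. cis (of_int (k j) * t) * g (\<theta> + t *\<^sub>R E))"
    proof -
      have "complex_of_real (u (\<theta> + t *\<^sub>R E)) * ee k \<theta> = cis (of_int (k j) * t) * g (\<theta> + t *\<^sub>R E)" for \<theta>
        by (simp add: g_def E_def ee_shift cis_mult)
      then show ?thesis by (simp add: G_def)
    qed
    also have "\<dots> = cis (of_int (k j) * t) * integral B (\<lambda>\<theta>. g (\<theta> + t *\<^sub>R E))"
      by simp
    also have "integral B (\<lambda>\<theta>. g (\<theta> + t *\<^sub>R E)) = I"
      unfolding B_def E_def I_def by (rule shift_inv[OF cg pg]) (use that in auto)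
    finally show ?thesis .
  qed
  have D1: "(G has_vector_derivative integral B (\<lambda>\<theta>. complex_of_real (pdir j u (\<theta> + 0 *\<^sub>R E)) * ee k \<theta>)) (at 0 within UNIV)"
    unfolding G_def B_def
  proof (rule leibniz_rule_vector_derivative[where fx="\<lambda>t \<theta>. complex_of_real (pdir j u (\<theta> + t *\<^sub>R E)) * ee k \<theta>"])
    fix t :: real and \<theta> :: "real^'n"
    have "((\<lambda>t. u (\<theta> + t *\<^sub>R E)) has_real_derivative pdir j u (\<theta> + t *\<^sub>R E)) (at t)"
      unfolding E_def by (rule smooth_deriv_line[OF sm])
    then show "((\<lambda>t. complex_of_real (u (\<theta> + t *\<^sub>R E)) * ee k \<theta>) has_vector_derivative
        complex_of_real (pdir j u (\<theta> + t *\<^sub>R E)) * ee k \<theta>) (at t within UNIV)"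
      by (intro has_vector_derivative_mult_left has_vector_derivative_of_real) (simp add: has_field_derivative_at_within)
  next
    fix t :: real
    show "(\<lambda>\<theta>. complex_of_real (u (\<theta> + t *\<^sub>R E)) * ee k \<theta>) integrable_on cbox 0 (\<chi> i. 2 * pi)"
      by (intro integrable_continuous continuous_intros cont_ee[of k, THEN continuous_on_subset]
          continuous_on_compose2[OF cu]) auto
  next
    show "continuous_on (UNIV \<times> cbox 0 (\<chi> i. 2 * pi)) (\<lambda>(t, \<theta>). complex_of_real (pdir j u (\<theta> + t *\<^sub>R E)) * ee k \<theta>)"
    proof -
      have c1: "continuous_on UNIV (\<lambda>p::real \<times> (real^'n). snd p + fst p *\<^sub>R E)"
        by (intro continuous_intros)
      have c2: "continuous_on UNIV (\<lambda>p::real \<times> (real^'n). pdir j u (snd p + fst p *\<^sub>R E))"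
        using continuous_on_compose[OF c1, where g="pdir j u"] cdu by (simp add: o_def continuous_on_subset)
      have c3: "continuous_on UNIV (\<lambda>p::real \<times> (real^'n). ee k (snd p))"
        using continuous_on_compose[OF continuous_on_snd[OF continuous_on_id], where g="ee k" and s=UNIV] cont_ee[of k]
        by (simp add: o_def continuous_on_subset)
      have "continuous_on UNIV (\<lambda>p::real \<times> (real^'n). complex_of_real (pdir j u (snd p + fst p *\<^sub>R E)) * ee k (snd p))"
        by (intro continuous_intros c2 c3)
      then show ?thesis by (simp add: split_beta) (erule continuous_on_subset, simp)
    qed
  qed auto
  have D2: "((\<lambda>t. cis (of_int (k j) * t) * I) has_vector_derivative (\<i> * of_int (k j) * I)) (at 0)"
  proof -
    have "((\<lambda>z. exp (\<i> * of_int (k j) * z)) has_field_derivative (\<i> * of_int (k j)) * exp (\<i> * of_int (k j) * of_real 0)) (at (of_real 0))"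
      by (auto intro!: derivative_eq_intros)
    then have "((\<lambda>t::real. exp (\<i> * of_int (k j) * of_real t)) has_vector_derivative (\<i> * of_int (k j))) (at 0)"
      using has_vector_derivative_real_field[where s=UNIV] by force
    then have "((\<lambda>t::real. cis (of_int (k j) * t)) has_vector_derivative (\<i> * of_int (k j))) (at 0)"
      by (simp add: cis_conv_exp algebra_simps)
    then show ?thesis by (intro has_vector_derivative_mult_left) 
  qed
  have D3: "(G has_vector_derivative (\<i> * of_int (k j) * I)) (at 0)"
    by (rule has_vector_derivative_transform_within_open[OF D2, of "{-2*pi<..<2*pi}"]) (auto simp: GI)
  have eq: "integral B (\<lambda>\<theta>. complex_of_real (pdir j u \<theta>) * ee k \<theta>) = \<i> * of_int (k j) * I"
    using vector_derivative_unique_at[OF _ D3] D1 by simp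
  show ?thesis
    unfolding fc_alt B_def[symmetric] eq by (simp add: I_def g_def B_def)
qed

lemma smooth_ipd_rep: "smooth_fun u \<Longrightarrow> smooth_fun (ipd (replicate m j) u)"
  by (induction m) (auto intro: smooth_pdir)

lemma periodic_ipd_rep: "periodic_torus u \<Longrightarrow> periodic_torus (ipd (replicate m j) u)"
  by (induction m) (auto intro: periodic_pdir)

lemma fourier_ipd_rep:
  fixes u :: "real^'n::finite \<Rightarrow> real"
  assumes sm: "smooth_fun u" and per: "periodic_torus u"
  shows "fourier_coeff (ipd (replicate m j) u) k = (\<i> * of_int (k j)) ^ m * fourier_coeff u k"
proof (induction m)
  case 0 then show ?case by simp
next
  case (Suc m)
  have "fourier_coeff (ipd (replicate (Suc m) j) u) k = fourier_coeff (pdir j (ipd (replicate m j) u)) k"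
    by simp
  also have "\<dots> = \<i> * of_int (k j) * fourier_coeff (ipd (replicate m j) u) k"
    by (rule fourier_pdir[OF smooth_ipd_rep[OF sm] periodic_ipd_rep[OF per]])
  finally show ?case using Suc by simp
qed

lemma fourier_bound:
  fixes v :: "real^'n::finite \<Rightarrow> real"
  assumes cv: "continuous_on UNIV v" and M: "\<And>\<theta>. \<bar>v \<theta>\<bar> \<le> M"
  shows "cmod (fourier_coeff v k) \<le> M"
proof -
  define B where "B = cbox (0::real^'n) (\<chi> i. 2*pi)"
  have M0: "M \<ge> 0" using M[of 0] by simp
  have cB: "Henstock_Kurzweil_Integration.content B = (2*pi) ^ CARD('n)"
  proof -
    have "0 \<in> B" unfolding B_def by (simp add: mem_box_cart)
    then have "B \<noteq> {}" by auto
    then show ?thesis unfolding B_def by (simp add: content_cbox_cart)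
  qed
  have "norm (integral B (\<lambda>\<theta>. complex_of_real (v \<theta>) * ee k \<theta>)) \<le> M * Henstock_Kurzweil_Integration.content B"
    unfolding B_def
  proof (rule integrable_bound[OF M0])
    show "(\<lambda>\<theta>. complex_of_real (v \<theta>) * ee k \<theta>) integrable_on cbox 0 (\<chi> i. 2 * pi)"
      by (intro integrable_continuous continuous_intros cont_ee[of k, THEN continuous_on_subset]
          continuous_on_subset[OF cv]) auto
    show "norm (complex_of_real (v x) * ee k x) \<le> M" for x
      using M[of x] by (simp add: ee_def norm_mult)
  qed
  then have Hb: "norm (integral B (\<lambda>\<theta>. complex_of_real (v \<theta>) * ee k \<theta>)) \<le> M * (2*pi) ^ CARD('n)"
    unfolding cB .
  have pos: "(2*pi) ^ CARD('n) > (0::real)" by simp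
  have "cmod (fourier_coeff v k) = norm (integral B (\<lambda>\<theta>. complex_of_real (v \<theta>) * ee k \<theta>)) / (2*pi) ^ CARD('n)"
    unfolding fc_alt B_def[symmetric] norm_mult norm_of_real using pos by simp
  also have "\<dots> \<le> M" using Hb pos by (simp add: divide_le_eq)
  finally show ?thesis .
qed

lemma enum_idx_props: "distinct (enum_idx :: 'n::finite list) \<and> set (enum_idx :: 'n list) = UNIV"
proof -
  have "\<exists>xs :: 'n list. distinct xs \<and> set xs = UNIV" using finite_distinct_list[of "UNIV :: 'n set"] by auto
  then show ?thesis unfolding enum_idx_def by (rule someI_ex)
qed

lemma concat_rep_single:
  "distinct xs \<Longrightarrow> concat (map (\<lambda>i. replicate (if i = j then m else 0) i) xs) = (if j \<in> set xs then replicate m j else [])"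
  by (induction xs) auto

lemma pdiff_single: "pdiff (\<lambda>i. if i = j then m else 0) f = ipd (replicate m j) f"
  unfolding pdiff_def using enum_idx_props concat_rep_single by (metis UNIV_I)

lemma mabs_single: "mabs (\<lambda>i::'n::finite. if i = j then m else 0) = m"
  unfolding mabs_def by simp



lemma sum1d:
  fixes p :: real assumes p: "p > 1"
  shows "(\<lambda>z::int. (1 + real_of_int \<bar>z\<bar>) powr (-p)) summable_on UNIV"
proof -
  define h where "h = (\<lambda>n::nat. (1 + real n) powr (-p))"
  have "summable (\<lambda>n::nat. real n powr (-p))" using p by (simp add: summable_real_powr_iff)
  then have "summable (\<lambda>n::nat. real (Suc n) powr (-p))" by (subst summable_Suc_iff)
  then have sh: "summable h" unfolding h_def by (simp add: add.commute)
  have hs: "h summable_on UNIV"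
    by (rule norm_summable_imp_summable_on) (use sh in \<open>simp add: h_def\<close>)
  have hs2: "(h \<circ> Suc) summable_on UNIV"
    by (rule summable_on_comparison_test[OF hs]) (use p in \<open>auto simp: h_def intro!: powr_mono2'\<close>)
  define f where "f = (\<lambda>z::int. (1 + real_of_int \<bar>z\<bar>) powr (-p))"
  have U: "(UNIV :: int set) = int ` UNIV \<union> (\<lambda>n. - int (Suc n)) ` UNIV"
  proof -
    have "z \<in> int ` UNIV \<union> (\<lambda>n. - int (Suc n)) ` UNIV" for z :: int
    proof (cases "z \<ge> 0")
      case True then show ?thesis by (metis UNIV_I UnI1 image_eqI nonneg_int_cases)
    next
      case False
      then have "z = - int (Suc (nat (- z - 1)))" by simp
      then show ?thesis by blast
    qed
    then show ?thesis by auto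
  qed
  have s1: "f summable_on int ` UNIV"
    by (subst summable_on_reindex) (use hs in \<open>auto simp: f_def h_def o_def\<close>)
  have s2: "f summable_on (\<lambda>n. - int (Suc n)) ` UNIV"
    by (subst summable_on_reindex) (use hs2 in \<open>auto simp: inj_on_def f_def h_def o_def add_ac\<close>)
  have "f summable_on (int ` UNIV \<union> (\<lambda>n. - int (Suc n)) ` UNIV)"
    by (rule summable_on_Un_disjoint[OF s1 s2]) auto
  then show ?thesis unfolding f_def[symmetric] using U by simp
qed

lemma kabs_ge: "\<bar>k j\<bar> \<le> kabs k"
  unfolding kabs_def by (rule member_le_sum) auto

lemma kabs_nonneg: "kabs k \<ge> 0"
  unfolding kabs_def by (rule sum_nonneg) auto

lemma Z_summable:
  "(\<lambda>k::'n::finite \<Rightarrow> int. (1 + real_of_int (kabs k)) powr (-(real CARD('n) + 1))) summable_on UNIV"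
proof -
  define N where "N = real CARD('n)"
  have N1: "N \<ge> 1" unfolding N_def by (simp add: Suc_le_eq)
  define p where "p = (N + 1) / N"
  have p: "p > 1" using N1 by (simp add: p_def field_simps)
  define h where "h = (\<lambda>z::int. (1 + real_of_int \<bar>z\<bar>) powr (-p))"
  have hs: "h summable_on UNIV" unfolding h_def by (rule sum1d[OF p])
  have h0: "h z \<ge> 0" for z by (simp add: h_def)
  have "(\<lambda>x. norm (h x)) summable_on UNIV" using hs h0 by simp
  then have "Infinite_Set_Sum.abs_summable_on h UNIV" using abs_summable_equivalent by blast
  then have "Infinite_Set_Sum.abs_summable_on (\<lambda>g. \<Prod>x\<in>UNIV. h (g x)) (PiE (UNIV::'n set) (\<lambda>_. UNIV))"
    by (intro abs_summable_on_prod_PiE) auto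
  then have "Infinite_Set_Sum.abs_summable_on (\<lambda>g::'n \<Rightarrow> int. \<Prod>x\<in>UNIV. h (g x)) UNIV"
    by simp
  then have "(\<lambda>g::'n \<Rightarrow> int. norm (\<Prod>x\<in>UNIV. h (g x))) summable_on UNIV"
    by (rule abs_summable_equivalent[THEN iffD2])
  then have ps: "(\<lambda>g::'n \<Rightarrow> int. \<Prod>x\<in>UNIV. h (g x)) summable_on UNIV"
    using h0 by (simp add: prod_nonneg abs_prod)
  show ?thesis
  proof (rule summable_on_comparison_test[OF ps])
    fix k :: "'n \<Rightarrow> int"
    define R where "R = 1 + real_of_int (kabs k)"
    have R1: "R \<ge> 1" using kabs_nonneg[of k] by (simp add: R_def)
    have pr: "(\<Prod>j\<in>UNIV. 1 + real_of_int \<bar>k j\<bar>) \<le> R ^ CARD('n)"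
    proof -
      have "(\<Prod>j\<in>UNIV. 1 + real_of_int \<bar>k j\<bar>) \<le> (\<Prod>j\<in>(UNIV::'n set). R)"
      proof (rule prod_mono)
        fix i :: 'n
        have "real_of_int \<bar>k i\<bar> \<le> real_of_int (kabs k)" using kabs_ge[of k i] by linarith
        then show "0 \<le> 1 + real_of_int \<bar>k i\<bar> \<and> 1 + real_of_int \<bar>k i\<bar> \<le> R" by (simp add: R_def)
      qed
      then show ?thesis by simp
    qed
    have pp: "(\<Prod>j\<in>UNIV. 1 + real_of_int \<bar>k j\<bar>) > 0" by (intro prod_pos) auto
    have "(R ^ CARD('n)) powr (-p) \<le> (\<Prod>j\<in>UNIV. 1 + real_of_int \<bar>k j\<bar>) powr (-p)"
      by (rule powr_mono2'[OF _ pp pr]) (use p in auto)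
    also have "\<dots> = (\<Prod>j\<in>UNIV. h (k j))" by (simp add: prod_powr_distrib h_def)
    finally have "(R ^ CARD('n)) powr (-p) \<le> (\<Prod>j\<in>UNIV. h (k j))" .
    moreover have "(R ^ CARD('n)) powr (-p) = R powr (-(N + 1))"
    proof -
      have "R ^ CARD('n) = R powr N" using R1 by (simp add: N_def powr_realpow)
      then show ?thesis using N1 by (simp add: powr_powr p_def)
    qed
    ultimately show "(1 + real_of_int (kabs k)) powr (-(real CARD('n) + 1)) \<le> (\<Prod>j\<in>UNIV. h (k j))"
      by (simp add: R_def N_def)
  qed simp
qed



lemma coeff_bound:
  fixes u :: "real^'n::finite \<Rightarrow> real"
  assumes sm: "smooth_fun u" and per: "periodic_torus u"
    and hyp: "\<And>\<beta> \<theta>. \<bar>pdiff \<beta> u \<theta>\<bar> \<le> A * L1 ^ mabs \<beta> * Gamma (\<rho> * real (mabs \<beta>) + 1)"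
  shows "\<bar>real_of_int (k j)\<bar> ^ m * cmod (fourier_coeff u k) \<le> A * L1 ^ m * Gamma (\<rho> * real m + 1)"
proof -
  define v where "v = ipd (replicate m j) u"
  have cv: "continuous_on UNIV v" unfolding v_def by (rule smooth_cont[OF smooth_ipd_rep[OF sm]])
  have vb: "\<bar>v \<theta>\<bar> \<le> A * L1 ^ m * Gamma (\<rho> * real m + 1)" for \<theta>
    using hyp[of "\<lambda>i. if i = j then m else 0" \<theta>] unfolding pdiff_single mabs_single v_def .
  have "cmod (fourier_coeff v k) \<le> A * L1 ^ m * Gamma (\<rho> * real m + 1)" by (rule fourier_bound[OF cv vb])
  moreover have "fourier_coeff v k = (\<i> * of_int (k j)) ^ m * fourier_coeff u k"
    unfolding v_def by (rule fourier_ipd_rep[OF sm per])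
  moreover have "cmod ((\<i> * of_int (k j)) ^ m * fourier_coeff u k) = \<bar>real_of_int (k j)\<bar> ^ m * cmod (fourier_coeff u k)"
    by (simp add: norm_mult norm_power)
  ultimately show ?thesis by simp
qed

lemma one_plus_pow: fixes X :: real assumes "X \<ge> 0" shows "(1 + X) ^ m \<le> 2 ^ m * (1 + X ^ m)"
proof (cases "X \<le> 1")
  case True
  have "(1 + X) ^ m \<le> 2 ^ m" using True assms by (intro power_mono) auto
  also have "\<dots> \<le> 2 ^ m * (1 + X ^ m)" using assms by simp
  finally show ?thesis .
next
  case False
  have "(1 + X) ^ m \<le> (2 * X) ^ m" using False assms by (intro power_mono) auto
  also have "\<dots> \<le> 2 ^ m * (1 + X ^ m)" by (simp add: power_mult_distrib)
  finally show ?thesis .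
qed

lemma coeff_poly:
  fixes u :: "real^'n::finite \<Rightarrow> real"
  assumes sm: "smooth_fun u" and per: "periodic_torus u"
    and hyp: "\<And>\<beta> \<theta>. \<bar>pdiff \<beta> u \<theta>\<bar> \<le> A * L1 ^ mabs \<beta> * Gamma (\<rho> * real (mabs \<beta>) + 1)"
  shows "(1 + real_of_int (kabs k)) ^ m * cmod (fourier_coeff u k) \<le>
     2 ^ m * (A + real CARD('n) ^ m * (A * L1 ^ m * Gamma (\<rho> * real m + 1)))"
proof -
  define N where "N = real CARD('n)"
  define X where "X = real_of_int (kabs k)"
  define F where "F = cmod (fourier_coeff u k)"
  have X0: "X \<ge> 0" using kabs_nonneg[of k] by (simp add: X_def)
  have F0: "F \<ge> 0" by (simp add: F_def)
  obtain j where j: "\<bar>k j\<bar> = Max (range (\<lambda>i. \<bar>k i\<bar>))"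
  proof -
    have "Max (range (\<lambda>i. \<bar>k i\<bar>)) \<in> range (\<lambda>i. \<bar>k i\<bar>)" by (rule Max_in) auto
    then show ?thesis using that by (metis imageE)
  qed
  have ji: "\<bar>k i\<bar> \<le> \<bar>k j\<bar>" for i unfolding j by (rule Max_ge) auto
  have "kabs k \<le> int CARD('n) * \<bar>k j\<bar>"
    unfolding kabs_def using sum_bounded_above[of UNIV "\<lambda>i. \<bar>k i\<bar>" "\<bar>k j\<bar>"] ji by simp
  then have "real_of_int (kabs k) \<le> real_of_int (int CARD('n) * \<bar>k j\<bar>)"
    by (simp only: of_int_le_iff)
  then have XN: "X \<le> N * \<bar>real_of_int (k j)\<bar>" unfolding X_def N_def by simp
  have F_A: "F \<le> A" using coeff_bound[OF sm per hyp, of k j 0] by (simp add: F_def)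
  have "X ^ m * F \<le> (N * \<bar>real_of_int (k j)\<bar>) ^ m * F"
    using XN X0 F0 by (intro mult_right_mono power_mono) auto
  also have "\<dots> = N ^ m * (\<bar>real_of_int (k j)\<bar> ^ m * F)" by (simp add: power_mult_distrib)
  also have "\<dots> \<le> N ^ m * (A * L1 ^ m * Gamma (\<rho> * real m + 1))"
    using coeff_bound[OF sm per hyp, of k j m] by (intro mult_left_mono) (auto simp: F_def N_def)
  finally have XF: "X ^ m * F \<le> N ^ m * (A * L1 ^ m * Gamma (\<rho> * real m + 1))" .
  have "(1 + X) ^ m * F \<le> 2 ^ m * (1 + X ^ m) * F"
    using one_plus_pow[OF X0] F0 by (intro mult_right_mono) auto
  also have "\<dots> = 2 ^ m * (F + X ^ m * F)" by (simp add: algebra_simps)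
  also have "\<dots> \<le> 2 ^ m * (A + N ^ m * (A * L1 ^ m * Gamma (\<rho> * real m + 1)))"
    using F_A XF by (intro mult_left_mono) auto
  finally show ?thesis by (simp add: X_def F_def N_def)
qed

theorem lemma4p4:
  fixes \<rho> :: real
  assumes "\<rho> \<ge> 1"
  shows "\<exists>c c' c''. c > 0 \<and> c' > 0 \<and> c'' > 0 \<and>
    (\<forall>(L0::real) (L1::real) (L2::real) (b :: ('n::finite \<Rightarrow> nat) \<Rightarrow> real^'n \<Rightarrow> real).
      L0 \<ge> 1 \<and> L1 \<ge> 1 \<and> L2 \<ge> 1 \<and>
      (\<forall>\<alpha>. mabs \<alpha> \<ge> 2 \<longrightarrow> smooth_fun (b \<alpha>) \<and> periodic_torus (b \<alpha>)) \<and>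
      (\<forall>\<alpha> \<beta> \<theta>. mabs \<alpha> \<ge> 2 \<longrightarrow>
          \<bar>pdiff \<beta> (b \<alpha>) \<theta>\<bar> \<le> L0 * L1 ^ mabs \<beta> * L2 ^ (mabs \<alpha> - 1) *
             Gamma (\<rho> * real (mabs \<beta>) + 1) * Gamma ((\<rho> - 1) * real (mabs \<alpha>) + 1))
      \<longrightarrow>
      (\<forall>s \<alpha>. s \<ge> 0 \<and> mabs \<alpha> \<ge> 2 \<longrightarrow>
          S_summable s (b \<alpha>) \<and>
          P_norm s (b \<alpha>) \<le> (c * L0 * L1 ^ (CARD('n) + 2)) * (c' * L1) powr s *
             (c'' * L2) ^ (mabs \<alpha> - 1) *
             Gamma (\<rho> * s + (\<rho> - 1) * (real (mabs \<alpha>) - 2) + 1)))"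
proof -
  define N where "N = CARD('n)"
  have N1: "N \<ge> 1" unfolding N_def by (simp add: Suc_le_eq)
  define Z where "Z = (\<lambda>k::'n \<Rightarrow> int. (1 + real_of_int (kabs k)) powr (-(real CARD('n) + 1)))"
  have Zs: "Z summable_on UNIV" unfolding Z_def by (rule Z_summable)
  define K where "K = infsum Z UNIV"
  have K0: "K \<ge> 0" unfolding K_def by (rule infsum_nonneg) (simp add: Z_def)
  define D where "D = nat \<lceil>\<rho> * (real N + 4)\<rceil>"
  define c where "c = 4 * (K + 1) * 2 ^ (N + 3) * real N ^ (N + 2) * real D ^ D * exp (real D + 1) * exp \<rho>"
  define c' where "c' = exp (1 + \<rho>) * 2 * real N"
  define c'' where "c'' = exp \<rho>"
  have D1: "D \<ge> 1"
  proof -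
    have "real N + 4 \<le> \<rho> * (real N + 4)" using mult_right_mono[of 1 \<rho> "real N + 4"] assms by simp
    then have "real D \<ge> 4" unfolding D_def by linarith
    then show ?thesis by simp
  qed
  have cpos: "c > 0" unfolding c_def using K0 N1 D1 by (intro mult_pos_pos) auto
  have c'pos: "c' > 0" unfolding c'_def using N1 by simp
  have c''pos: "c'' > 0" unfolding c''_def by simp
  show ?thesis
  proof (intro exI conjI allI impI, fact cpos, fact c'pos, fact c''pos)
    fix L0 L1 L2 :: real and b :: "('n \<Rightarrow> nat) \<Rightarrow> real^'n \<Rightarrow> real" and s :: real and \<alpha> :: "'n \<Rightarrow> nat"
    assume H: "L0 \<ge> 1 \<and> L1 \<ge> 1 \<and> L2 \<ge> 1 \<and>
      (\<forall>\<alpha>. mabs \<alpha> \<ge> 2 \<longrightarrow> smooth_fun (b \<alpha>) \<and> periodic_torus (b \<alpha>)) \<and>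
      (\<forall>\<alpha> \<beta> \<theta>. mabs \<alpha> \<ge> 2 \<longrightarrow>
          \<bar>pdiff \<beta> (b \<alpha>) \<theta>\<bar> \<le> L0 * L1 ^ mabs \<beta> * L2 ^ (mabs \<alpha> - 1) *
             Gamma (\<rho> * real (mabs \<beta>) + 1) * Gamma ((\<rho> - 1) * real (mabs \<alpha>) + 1))"
      and sa: "s \<ge> 0 \<and> mabs \<alpha> \<ge> 2"
    define u where "u = b \<alpha>"
    define a where "a = mabs \<alpha>"
    have L: "L0 \<ge> 1" "L1 \<ge> 1" "L2 \<ge> 1" using H by auto
    have s: "s \<ge> 0" and a: "a \<ge> 2" using sa by (auto simp: a_def)
    have sm: "smooth_fun u" and per: "periodic_torus u" using H sa by (auto simp: u_def)
    define A where "A = L0 * L2 ^ (a - 1) * Gamma ((\<rho> - 1) * real a + 1)"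
    have hyp: "\<bar>pdiff \<beta> u \<theta>\<bar> \<le> A * L1 ^ mabs \<beta> * Gamma (\<rho> * real (mabs \<beta>) + 1)" for \<beta> \<theta>
      using H sa unfolding u_def A_def a_def by (auto simp: mult_ac)
    define m where "m = nat \<lceil>s\<rceil> + N + 1"
    have m1: "real m \<ge> s + real N + 1" unfolding m_def by linarith
    have m2: "real m \<le> s + real N + 2" unfolding m_def using s by linarith
    have m0: "m \<ge> 1" unfolding m_def by simp
    define W where "W = 2 ^ m * (A + real N ^ m * (A * L1 ^ m * Gamma (\<rho> * real m + 1)))"
    define f where "f = (\<lambda>k. (1 + real_of_int (kabs k)) powr s * cmod (fourier_coeff u k))"
    have fW: "f k \<le> W * Z k" for k
    proof -
      define X where "X = 1 + real_of_int (kabs k)"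
      have X1: "X \<ge> 1" using kabs_nonneg[of k] by (simp add: X_def)
      have "f k = X powr (s - real m) * (X ^ m * cmod (fourier_coeff u k))"
        using X1 by (simp add: f_def X_def[symmetric] powr_diff powr_realpow)
      also have "\<dots> \<le> X powr (-(real N + 1)) * W"
      proof (rule mult_mono)
        show "X powr (s - real m) \<le> X powr (-(real N + 1))" using X1 m1 by (intro powr_mono) auto
        show "X ^ m * cmod (fourier_coeff u k) \<le> W"
          unfolding W_def X_def N_def by (rule coeff_poly[OF sm per hyp])
      qed (use X1 in auto)
      finally show ?thesis by (simp add: Z_def X_def N_def mult.commute)
    qed
    have f0: "f k \<ge> 0" for k by (simp add: f_def)
    have WZs: "(\<lambda>k. W * Z k) summable_on UNIV" by (rule summable_on_cmult_right[OF Zs])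
    have fs: "f summable_on UNIV" by (rule summable_on_comparison_test[OF WZs fW f0])
    have Sb: "S_norm s u \<le> W * K"
    proof -
      have "S_norm s u = infsum f UNIV" by (simp add: S_norm_def f_def)
      also have "\<dots> \<le> infsum (\<lambda>k. W * Z k) UNIV" by (rule infsum_mono[OF fs WZs fW])
      also have "\<dots> = W * K" by (simp add: K_def infsum_cmult_right')
      finally show ?thesis .
    qed
    have "P_norm s u \<le> (s + 1)^2 * (W * K)"
      unfolding P_norm_def by (intro mult_left_mono Sb) auto
    also have "\<dots> = (s + 1)^2 * W * K" by simp
    also have "\<dots> \<le> (c * L0 * L1 ^ (N + 2)) * (c' * L1) powr s * (c'' * L2) ^ (a - 1) *
             Gamma (\<rho> * s + (\<rho> - 1) * (real a - 2) + 1)"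
      unfolding W_def A_def c_def c'_def c''_def D_def
      by (rule final_real[OF assms s a N1 K0 L m2 m0])
    finally show "P_norm s (b \<alpha>) \<le> (c * L0 * L1 ^ (CARD('n) + 2)) * (c' * L1) powr s *
             (c'' * L2) ^ (mabs \<alpha> - 1) * Gamma (\<rho> * s + (\<rho> - 1) * (real (mabs \<alpha>) - 2) + 1)"
      by (simp add: u_def a_def N_def)
    show "S_summable s (b \<alpha>)" using fs by (simp add: S_summable_def f_def u_def)
  qed
qed


end
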